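(* For all integers $m\ge1$ and $r\ge0$: (i) for all $n,k\ge0$, $w_{m,r}(n+1,k+1)=\sum_{j\ge0}\frac{n+1}{k+1}\binom{k+j}{j}\mathcal B_j\,m^j\,w_{m,r}(n,k+j)$ (a finite sum since $w_{m,r}(n,i)=0$ for $i>n$); (ii) for all $n\ge1$ and $1\le k\le n$, $$w_{m,r}(n,k)+r\sum_{l=0}^{n-1}\binom{n-1}{l}(n-l-1)!\,w_{m,r}(l,k)(-m)^{n-l-1}=\sum_{l=k}^n\binom{n-1}{l-1}(-m)^{n-l}(n-l)!\,w_{m,r}(l-1,k-1);$$ (iii) for all $n\ge1$ and $1\le k\le n$, $k\,w_{m,r}(n,k)=\sum_{l=k}^n\binom{n}{l-1}(-m)^{n-l}(n-l)!\,w_{m,r}(l-1,k-1)$.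
   Context: For integers $m\ge1$, $n,k,r\ge0$, the $r$-Whitney numbers of the first kind $w_{m,r}(n,k)$ are defined by $\sum_{n\ge k}w_{m,r}(n,k)\frac{z^n}{n!}=(1+mz)^{-r/m}\frac{\ln^k(1+mz)}{m^kk!}$ (and $w_{m,r}(n,k)=0$ for $k>n$). The Bernoulli numbers $\mathcal B_n$ are defined by $\frac{t}{e^t-1}=\sum_{n\ge0}\mathcal B_n\frac{t^n}{n!}$. *)

theory Defs
  imports "HOL-Computational_Algebra.Formal_Power_Series"
begin

definition whitney1_egf :: "nat \<Rightarrow> nat \<Rightarrow> nat \<Rightarrow> real fps" where
  "whitney1_egf m r k =
     (fps_binomial (- real r / real m) oo (fps_const (real m) * fps_X))
     * ((fps_ln 1 oo (fps_const (real m) * fps_X)) ^ k)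
     * fps_const (1 / (real m ^ k * fact k))"

definition whitney1 :: "nat \<Rightarrow> nat \<Rightarrow> nat \<Rightarrow> nat \<Rightarrow> real" where
  "whitney1 m r n k = fact n * fps_nth (whitney1_egf m r k) n"

definition bernoulli_num :: "nat \<Rightarrow> real" where
  "bernoulli_num n = fact n * fps_nth (fps_X / (fps_exp 1 - 1)) n"

end

theory Submission
  imports Defs
begin
unbundle fps_syntax

definition Lm :: "real \<Rightarrow> real fps" where "Lm c = fps_ln 1 oo (fps_const c * fps_X)"
definition Pm :: "real \<Rightarrow> real \<Rightarrow> real fps" where "Pm a c = fps_binomial a oo (fps_const c * fps_X)"
definition Iq :: "real \<Rightarrow> real fps" where "Iq c = Abs_fps (\<lambda>n. (- c) ^ n)"
definition Fk :: "real \<Rightarrow> real \<Rightarrow> nat \<Rightarrow> real fps" where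
  "Fk c a k = Pm a c * Lm c ^ k * fps_const (1 / (c ^ k * fact k))"

lemma Lm_nth: "Lm c $ n = c ^ n * fps_ln 1 $ n"
  by (simp add: Lm_def fps_compose_linear)
lemma Lm_0[simp]: "Lm c $ 0 = 0" by (simp add: Lm_nth)
lemma Pm_nth: "Pm a c $ n = c ^ n * (a gchoose n)"
  by (simp add: Pm_def fps_compose_linear)

lemma neg_pow: "(- (c::real)) ^ n = (- 1) ^ n * c ^ n"
  by (metis mult_minus1 power_mult_distrib)

lemma Lm_deriv: "fps_deriv (Lm c) = fps_const c * Iq c"
proof (rule fps_ext)
  fix n
  show "fps_deriv (Lm c) $ n = (fps_const c * Iq c) $ n"
    by (simp add: Lm_nth fps_ln_nth Iq_def neg_pow[of c n] del: of_nat_Suc)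
qed

lemma Q_Iq: "(1 + fps_const c * fps_X) * Iq c = 1"
proof (rule fps_ext)
  fix n
  show "((1 + fps_const c * fps_X) * Iq c) $ n = (1::real fps) $ n"
    by (cases n) (simp_all add: Iq_def distrib_right mult.assoc)
qed

lemma Q_nth: "((1 + fps_const c * fps_X) * (G::real fps)) $ n = G $ n + (if n = 0 then 0 else c * G $ (n - 1))"
proof -
  have "(1 + fps_const c * fps_X) * G = G + fps_const c * (fps_X * G)" by (simp add: algebra_simps)
  then show ?thesis by simp
qed

lemma Pm_deriv: "(1 + fps_const c * fps_X) * fps_deriv (Pm a c) = fps_const (c * a) * Pm a c"
proof (rule fps_ext)
  fix n
  have 1: "((1 + fps_const c * fps_X) * fps_deriv (Pm a c)) $ n
     = c ^ Suc n * (of_nat n * (a gchoose n) + of_nat (Suc n) * (a gchoose (Suc n)))"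
    by (cases n) (simp_all add: Q_nth Pm_nth algebra_simps del: of_nat_Suc)
  have "(c * a) * (c ^ n * (a gchoose n)) = c ^ Suc n * (a * (a gchoose n))" by (simp add: algebra_simps)
  also have "\<dots> = c ^ (Suc n) * (of_nat n * (a gchoose n) + of_nat (Suc n) * (a gchoose (Suc n)))"
    by (simp only: gbinomial_mult_1)
  finally have e: "(c * a) * (c ^ n * (a gchoose n)) = c ^ (Suc n) * (of_nat n * (a gchoose n) + of_nat (Suc n) * (a gchoose (Suc n)))" .
  have e2: "(fps_const (c * a) * Pm a c) $ n = (c * a) * (c ^ n * (a gchoose n))" by (simp add: Pm_nth)
  show "((1 + fps_const c * fps_X) * fps_deriv (Pm a c)) $ n = (fps_const (c * a) * Pm a c) $ n"
    by (simp only: 1 e2 e)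
qed

lemma pow_low: "(a::real fps) $ 0 = 0 \<Longrightarrow> j < k \<Longrightarrow> (a ^ k) $ j = 0"
  using startsby_zero_power_prefix by blast

lemma mult_low: "(\<And>i. i < k \<Longrightarrow> (a::real fps) $ i = 0) \<Longrightarrow> j < k \<Longrightarrow> (a * b) $ j = 0"
  by (auto simp: fps_mult_nth intro!: sum.neutral)

lemma Fk_low: "j < k \<Longrightarrow> Fk c a k $ j = 0"
proof -
  assume "j < k"
  have "(Lm c ^ k * (Pm a c * fps_const (1 / (c ^ k * fact k)))) $ j = 0"
    by (rule mult_low[OF pow_low]) (use \<open>j<k\<close> in auto)
  then show ?thesis by (simp add: Fk_def ac_simps)
qed

lemma Bf_mult: "fps_X / (fps_exp 1 - 1) * (fps_exp (1::real) - 1) = fps_X"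
proof -
  have "fps_exp (1::real) - 1 dvd fps_X"
    by (simp add: fps_dvd_iff subdegree_leI)
  then show ?thesis by simp
qed

lemma E_Lm: "(fps_exp 1 - 1) oo Lm c = fps_const c * fps_X"
proof -
  have "(fps_exp (1::real) - 1) oo Lm c = ((fps_exp 1 - 1) oo fps_ln 1) oo (fps_const c * fps_X)"
    unfolding Lm_def by (rule fps_compose_assoc) auto
  also have "(fps_exp (1::real) - 1) oo fps_ln 1 = fps_X"
    by (simp add: fps_ln_fps_exp_inv fps_inv_right)
  finally show ?thesis by simp
qed

lemma Bf_Lm: "((fps_X / (fps_exp 1 - 1)) oo Lm c) * (fps_const c * fps_X) = Lm c"
proof -
  have "((fps_X / (fps_exp 1 - 1)) oo Lm c) * ((fps_exp 1 - 1) oo Lm c) = (fps_X / (fps_exp 1 - 1) * (fps_exp (1::real) - 1)) oo Lm c"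
    by (rule fps_compose_mult_distrib[symmetric]) simp
  then show ?thesis by (simp add: Bf_mult E_Lm)
qed

lemma trunc:
  fixes f b g :: "real fps"
  assumes b0: "b $ 0 = 0"
  shows "((f oo b) * g) $ n = (\<Sum>j\<le>n. f $ j * (b ^ j * g) $ n)"
proof -
  have "((f oo b) * g) $ n = (\<Sum>i=0..n. (\<Sum>j=0..i. f $ j * (b ^ j $ i)) * g $ (n - i))"
    by (simp add: fps_mult_nth fps_compose_nth)
  also have "\<dots> = (\<Sum>i=0..n. (\<Sum>j=0..n. f $ j * (b ^ j $ i) * g $ (n - i)))"
  proof (rule sum.cong[OF refl])
    fix i assume i: "i \<in> {0..n}"
    have "(\<Sum>j=0..i. f $ j * (b ^ j $ i)) * g $ (n - i) = (\<Sum>j=0..i. f $ j * (b ^ j $ i) * g $ (n - i))"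
      by (simp add: sum_distrib_right)
    also have "\<dots> = (\<Sum>j=0..n. f $ j * (b ^ j $ i) * g $ (n - i))"
      by (rule sum.mono_neutral_left) (use i pow_low[OF b0] in auto)
    finally show "(\<Sum>j=0..i. f $ j * (b ^ j $ i)) * g $ (n - i) = (\<Sum>j=0..n. f $ j * (b ^ j $ i) * g $ (n - i))" .
  qed
  also have "\<dots> = (\<Sum>j=0..n. (\<Sum>i=0..n. f $ j * (b ^ j $ i) * g $ (n - i)))"
    by (rule sum.swap)
  also have "\<dots> = (\<Sum>j=0..n. f $ j * (b ^ j * g) $ n)"
    by (simp add: fps_mult_nth sum_distrib_left mult.assoc)
  finally show ?thesis by (simp add: atLeast0AtMost)
qed

lemma Fk_Suc: "c \<noteq> 0 \<Longrightarrow> fps_const (of_nat (Suc j)) * Fk c a (Suc j) = fps_const (1 / c) * Lm c * Fk c a j"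
proof -
  assume c: "c \<noteq> 0"
  have "fps_const (of_nat (Suc j)) * Fk c a (Suc j) = fps_const (of_nat (Suc j) * (1 / (c ^ Suc j * fact (Suc j)))) * (Pm a c * Lm c ^ j * Lm c)"
    by (simp add: Fk_def ac_simps del: of_nat_Suc)
  also have "of_nat (Suc j) * (1 / (c ^ Suc j * fact (Suc j))) = (1 / c) * (1 / (c ^ j * fact j))"
    using c by (simp add: field_simps del: of_nat_Suc)
  finally show ?thesis by (simp add: Fk_def ac_simps del: of_nat_Suc)
qed

lemma Fk_add: "c \<noteq> 0 \<Longrightarrow> Lm c ^ j * Fk c a k = fps_const (c ^ j * fact (k + j) / fact k) * Fk c a (k + j)"
proof -
  assume c: "c \<noteq> 0"
  have "fps_const (c ^ j * fact (k + j) / fact k) * Fk c a (k + j) = fps_const (c ^ j * fact (k + j) / fact k * (1 / (c ^ (k + j) * fact (k + j)))) * (Pm a c * Lm c ^ k * Lm c ^ j)"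
    by (simp add: Fk_def ac_simps power_add)
  also have "c ^ j * fact (k + j) / fact k * (1 / (c ^ (k + j) * fact (k + j))) = 1 / (c ^ k * fact k)"
    using c by (simp add: field_simps power_add)
  finally show ?thesis using c by (simp add: Fk_def ac_simps power_add)
qed

lemma Fk_deriv: "c \<noteq> 0 \<Longrightarrow> (1 + fps_const c * fps_X) * fps_deriv (Fk c a (Suc j)) = fps_const (c * a) * Fk c a (Suc j) + Fk c a j"
proof -
  assume c: "c \<noteq> 0"
  let ?Q = "1 + fps_const c * fps_X"
  let ?K = "fps_const (1 / (c ^ Suc j * fact (Suc j)))"
  have QL: "?Q * fps_deriv (Lm c) = fps_const c"
    by (metis Lm_deriv Q_Iq mult.left_commute mult.right_neutral)
  have "fps_deriv (Fk c a (Suc j)) = (fps_deriv (Pm a c) * Lm c ^ Suc j + Pm a c * (fps_const (of_nat (Suc j)) * fps_deriv (Lm c) * Lm c ^ j)) * ?K"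
    by (simp add: Fk_def fps_deriv_power del: of_nat_Suc power_Suc)
  note d = this
  have "?Q * fps_deriv (Fk c a (Suc j)) = ((?Q * fps_deriv (Pm a c)) * Lm c ^ Suc j * ?K) + Pm a c * fps_const (of_nat (Suc j)) * (?Q * fps_deriv (Lm c)) * Lm c ^ j * ?K"
    unfolding d by (simp only: algebra_simps)
  also have "\<dots> = fps_const (c * a) * Fk c a (Suc j) + Pm a c * Lm c ^ j * fps_const (of_nat (Suc j) * c * (1 / (c ^ Suc j * fact (Suc j))))"
    unfolding Pm_deriv QL by (simp add: Fk_def ac_simps del: of_nat_Suc power_Suc)
  also have "of_nat (Suc j) * c * (1 / (c ^ Suc j * fact (Suc j))) = 1 / (c ^ j * fact j)"
    using c by (simp add: field_simps del: of_nat_Suc)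
  finally show ?thesis by (simp add: Fk_def)
qed

lemma fact_choose_real: "i \<le> n \<Longrightarrow> real (n choose i) * fact i * fact (n - i) = (fact n :: real)"
proof -
  assume "i \<le> n"
  from binomial_fact_lemma[OF this] have "real (fact i * fact (n - i) * (n choose i)) = real (fact n)" by simp
  then show ?thesis by (simp add: ac_simps)
qed

lemma term3:
  assumes c: "c \<noteq> 0"
  shows "fact (p + d + 1) * (1 / c * (c ^ (d + 1) * ((- 1) ^ d / real (d + 1))))
     = real ((p + d + 1) choose p) * (- c) ^ d * fact d * (fact p :: real)"
proof -
  have f: "real ((p + d + 1) choose p) * fact p * fact (d + 1) = (fact (p + d + 1) :: real)"
    using fact_choose_real[of p "p + d + 1"] by simp
  have "fact (d + 1) = (real d + 1) * (fact d :: real)" by simp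
  then have f2: "real ((p + d + 1) choose p) * fact p * ((real d + 1) * fact d) = (fact (p + d + 1) :: real)"
    using f by (simp add: algebra_simps)
  show ?thesis
    unfolding f2[symmetric] using c by (simp add: field_simps neg_pow[of c d])
qed

lemma part3:
  assumes c: "c \<noteq> 0" and "1 \<le> n" "1 \<le> k" "k \<le> n"
  shows "real k * (fact n * Fk c a k $ n) = (\<Sum>l=k..n. real (n choose (l - 1)) * (- c) ^ (n - l) * fact (n - l) * (fact (l - 1) * Fk c a (k - 1) $ (l - 1)))"
proof -
  obtain j where kj: "k = Suc j" using assms by (cases k) auto
  let ?f = "\<lambda>i. Lm c $ i * Fk c a j $ (n - i)"
  let ?g = "\<lambda>l. real (n choose (l - 1)) * (- c) ^ (n - l) * fact (n - l) * (fact (l - 1) * Fk c a (k - 1) $ (l - 1))"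
  have "(fps_const (of_nat (Suc j)) * Fk c a (Suc j)) $ n = (fps_const (1 / c) * (Lm c * Fk c a j)) $ n"
    using Fk_Suc[OF c, of j a] by (simp add: mult.assoc del: of_nat_Suc)
  then have "real k * Fk c a k $ n = 1 / c * (Lm c * Fk c a j) $ n"
    by (simp add: kj del: of_nat_Suc)
  then have e: "real k * Fk c a k $ n = 1 / c * (\<Sum>i=0..n. ?f i)"
    by (simp only: fps_mult_nth)
  have "(\<Sum>i=0..n. ?f i) = (\<Sum>i=1..n. ?f i)"
    by (subst sum.atLeast_Suc_atMost) simp_all
  also have "\<dots> = (\<Sum>l=1..n. ?f (n + 1 - l))"
    by (subst sum.atLeastAtMost_rev) simp
  finally have e2: "(\<Sum>i=0..n. ?f i) = (\<Sum>l=1..n. ?f (n + 1 - l))" .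
  have e3: "(\<Sum>l=k..n. ?g l) = (\<Sum>l=1..n. ?g l)"
  proof (rule sum.mono_neutral_left)
    show "\<forall>i\<in>{1..n} - {k..n}. ?g i = 0"
      using Fk_low[of _ "k - 1" c a] by auto
  qed (use assms in auto)
  have e4: "fact n * (1 / c * ?f (n + 1 - l)) = ?g l" if l: "l \<in> {1..n}" for l
  proof -
    obtain p d where pd: "l = p + 1" "n = p + d + 1" using l
      by (metis One_nat_def add.commute add_Suc_right atLeastAtMost_iff le_Suc_ex le_add_diff_inverse plus_1_eq_Suc)
    have "fact n * (1 / c * ?f (n + 1 - l)) = (fact (p + d + 1) * (1 / c * (c ^ (d + 1) * ((- 1) ^ d / real (d + 1))))) * Fk c a j $ p"
    proof -
      have "n + 1 - l = d + 1" "n - (n + 1 - l) = p" by (simp_all add: pd)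
      then show ?thesis by (simp only: Lm_nth fps_ln_nth) (simp add: pd ac_simps)
    qed
    also have "\<dots> = ?g l"
      unfolding term3[OF c] by (simp add: pd kj)
    finally show ?thesis .
  qed
  have "real k * (fact n * Fk c a k $ n) = fact n * (real k * Fk c a k $ n)" by simp
  also have "\<dots> = fact n * (1 / c * (\<Sum>i=0..n. ?f i))" by (simp only: e)
  also have "\<dots> = (\<Sum>l=1..n. fact n * (1 / c * ?f (n + 1 - l)))"
    by (simp only: e2 sum_distrib_left)
  also have "\<dots> = (\<Sum>l=1..n. ?g l)"
    by (rule sum.cong[OF refl]) (rule e4)
  also have "\<dots> = (\<Sum>l=k..n. ?g l)" by (rule e3[symmetric])
  finally show ?thesis .
qed

lemma part2:
  assumes c: "c \<noteq> 0" and ca: "c * a = - r" and "1 \<le> n" "1 \<le> k" "k \<le> n"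
  shows "fact n * Fk c a k $ n + r * (\<Sum>l=0..n-1. real ((n - 1) choose l) * fact (n - l - 1)
                 * (fact l * Fk c a k $ l) * (- c) ^ (n - l - 1))
       = (\<Sum>l=k..n. real ((n - 1) choose (l - 1)) * (- c) ^ (n - l) * fact (n - l)
                 * (fact (l - 1) * Fk c a (k - 1) $ (l - 1)))"
proof -
  obtain j where kj: "k = Suc j" using assms by (cases k) auto
  obtain n' where nn: "n = Suc n'" using assms by (cases n) auto
  let ?F = "Fk c a k" and ?G = "Fk c a j"
  let ?A = "\<Sum>i=0..n'. ?F $ i * (- c) ^ (n' - i)"
  let ?B = "\<Sum>i=0..n'. ?G $ i * (- c) ^ (n' - i)"
  let ?g = "\<lambda>l. real ((n - 1) choose (l - 1)) * (- c) ^ (n - l) * fact (n - l) * (fact (l - 1) * Fk c a (k - 1) $ (l - 1))"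
  have "Iq c * ((1 + fps_const c * fps_X) * fps_deriv ?F) = Iq c * (fps_const (c * a) * ?F + ?G)"
    by (simp only: Fk_deriv[OF c, of a j, folded kj])
  moreover have QI: "Iq c * (1 + fps_const c * fps_X) = 1"
    using Q_Iq[of c] by (simp only: mult.commute)
  moreover have "Iq c * ((1 + fps_const c * fps_X) * fps_deriv ?F) = fps_deriv ?F"
    by (simp only: mult.assoc[symmetric] QI mult_1_left)
  ultimately have "fps_deriv ?F = (fps_const (c * a) * ?F + ?G) * Iq c"
    by (simp only: mult.commute)
  then have "fps_deriv ?F $ n' = ((fps_const (c * a) * ?F + ?G) * Iq c) $ n'" by simp
  moreover have "((fps_const (c * a) * ?F + ?G) * Iq c) $ n' = (\<Sum>i=0..n'. (c * a * ?F $ i + ?G $ i) * (- c) ^ (n' - i))"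
    by (simp only: fps_mult_nth) (simp add: Iq_def)
  moreover have "(\<Sum>i=0..n'. (c * a * ?F $ i + ?G $ i) * (- c) ^ (n' - i)) = c * a * ?A + ?B"
    by (simp add: sum.distrib sum_distrib_left algebra_simps)
  moreover have "fps_deriv ?F $ n' = real (Suc n') * ?F $ n"
    by (simp add: nn del: of_nat_Suc)
  ultimately have d: "real (Suc n') * ?F $ n = c * a * ?A + ?B"
    by simp
  have rs: "(\<Sum>l=0..n-1. real ((n - 1) choose l) * fact (n - l - 1) * (fact l * ?F $ l) * (- c) ^ (n - l - 1)) = fact n' * ?A"
    unfolding sum_distrib_left
  proof (rule sum.cong)
    fix l assume l: "l \<in> {0..n'}"
    have "real (n' choose l) * fact l * fact (n' - l) = (fact n' :: real)"
      using l by (intro fact_choose_real) auto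
    then show "real ((n - 1) choose l) * fact (n - l - 1) * (fact l * ?F $ l) * (- c) ^ (n - l - 1) = fact n' * (?F $ l * (- c) ^ (n' - l))"
      by (simp add: nn) (metis (no_types, lifting) mult.assoc mult.commute)
  qed (simp add: nn)
  have e3: "(\<Sum>l=k..n. ?g l) = (\<Sum>l=1..n. ?g l)"
  proof (rule sum.mono_neutral_left)
    show "\<forall>i\<in>{1..n} - {k..n}. ?g i = 0"
      using Fk_low[of _ "k - 1" c a] by auto
  qed (use assms in auto)
  have e40: "(\<Sum>l=1..n. ?g l) = (\<Sum>i=0..n'. ?g (Suc i))"
    by (subst sum.shift_bounds_cl_Suc_ivl[symmetric]) (simp add: nn)
  have e4: "(\<Sum>l=1..n. ?g l) = fact n' * ?B"
    unfolding e40 sum_distrib_left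
  proof (rule sum.cong)
    fix i assume i: "i \<in> {0..n'}"
    have "real (n' choose i) * fact i * fact (n' - i) = (fact n' :: real)"
      using i by (intro fact_choose_real) auto
    then show "?g (Suc i) = fact n' * (?G $ i * (- c) ^ (n' - i))"
      by (simp add: nn kj) (metis (no_types, lifting) mult.assoc mult.commute)
  qed simp
  have "fact n * ?F $ n = fact n' * (c * a * ?A + ?B)"
    using d by (simp add: nn del: of_nat_Suc)
  then have "fact n * ?F $ n = fact n' * ?B + (c * a) * (fact n' * ?A)"
    by (simp add: algebra_simps)
  then have fin: "fact n * ?F $ n + r * (fact n' * ?A) = fact n' * ?B"
    unfolding ca by simp
  show ?thesis
    unfolding rs e3 e4 by (rule fin)
qed

lemma part1:
  assumes c: "c \<noteq> 0"
  shows "fact (n + 1) * Fk c a (k + 1) $ (n + 1) =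
     (\<Sum>j\<le>n. real (n + 1) / real (k + 1) * real ((k + j) choose j)
                 * (fact j * (fps_X / (fps_exp 1 - 1)) $ j) * c ^ j * (fact n * Fk c a (k + j) $ n))"
proof -
  let ?Bf = "fps_X / (fps_exp 1 - 1) :: real fps"
  let ?H = "(?Bf oo Lm c) * Fk c a k"
  have "Lm c * Fk c a k = ((?Bf oo Lm c) * (fps_const c * fps_X)) * Fk c a k"
    by (simp only: Bf_Lm)
  also have "\<dots> = fps_X * (fps_const c * ?H)" by (simp only: ac_simps)
  finally have LF: "Lm c * Fk c a k = fps_X * (fps_const c * ?H)" .
  have "(fps_const (of_nat (Suc k)) * Fk c a (Suc k)) $ (Suc n) = (fps_const (1 / c) * (Lm c * Fk c a k)) $ (Suc n)"
    using Fk_Suc[OF c, of k a] by (simp add: mult.assoc del: of_nat_Suc)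
  then have "real (Suc k) * Fk c a (Suc k) $ (Suc n) = ?H $ n"
    unfolding LF using c by (simp del: of_nat_Suc)
  also have "\<dots> = (\<Sum>j\<le>n. ?Bf $ j * (Lm c ^ j * Fk c a k) $ n)"
    by (rule trunc) simp
  also have "\<dots> = (\<Sum>j\<le>n. ?Bf $ j * (c ^ j * fact (k + j) / fact k * Fk c a (k + j) $ n))"
    by (simp add: Fk_add[OF c])
  finally have e: "real (Suc k) * Fk c a (Suc k) $ (Suc n) = (\<Sum>j\<le>n. ?Bf $ j * (c ^ j * fact (k + j) / fact k * Fk c a (k + j) $ n))" .
  have "fact (n + 1) * Fk c a (k + 1) $ (n + 1) = fact (n + 1) / real (k + 1) * (real (Suc k) * Fk c a (Suc k) $ (Suc n))"
    by simp
  also have "\<dots> = (\<Sum>j\<le>n. fact (n + 1) / real (k + 1) * (?Bf $ j * (c ^ j * fact (k + j) / fact k * Fk c a (k + j) $ n)))"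
    unfolding e sum_distrib_left ..
  also have "\<dots> = (\<Sum>j\<le>n. real (n + 1) / real (k + 1) * real ((k + j) choose j)
                 * (fact j * ?Bf $ j) * c ^ j * (fact n * Fk c a (k + j) $ n))"
  proof (rule sum.cong[OF refl])
    fix j
    have f: "real ((k + j) choose j) * fact j * fact k = (fact (k + j) :: real)"
      using fact_choose_real[of j "k + j"] by simp
    show "fact (n + 1) / real (k + 1) * (?Bf $ j * (c ^ j * fact (k + j) / fact k * Fk c a (k + j) $ n)) =
      real (n + 1) / real (k + 1) * real ((k + j) choose j) * (fact j * ?Bf $ j) * c ^ j * (fact n * Fk c a (k + j) $ n)"
      unfolding f[symmetric] by (simp add: field_simps del: of_nat_Suc)
  qed
  finally show ?thesis .
qed

lemma W: "whitney1 m r n k = fact n * Fk (real m) (- real r / real m) k $ n"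
  unfolding whitney1_def whitney1_egf_def Fk_def Pm_def Lm_def by (rule refl)

theorem mainTheorem19:
  fixes m r :: nat
  assumes "m \<ge> 1"
  shows "(\<forall>n k. whitney1 m r (n + 1) (k + 1) =
            (\<Sum>j\<le>n. real (n + 1) / real (k + 1) * real ((k + j) choose j)
                 * bernoulli_num j * real m ^ j * whitney1 m r n (k + j)))
       \<and> (\<forall>n k. 1 \<le> n \<longrightarrow> 1 \<le> k \<longrightarrow> k \<le> n \<longrightarrow>
            whitney1 m r n k + real r * (\<Sum>l=0..n-1. real ((n - 1) choose l) * fact (n - l - 1)
                 * whitney1 m r l k * (- real m) ^ (n - l - 1))
            = (\<Sum>l=k..n. real ((n - 1) choose (l - 1)) * (- real m) ^ (n - l) * fact (n - l)
                 * whitney1 m r (l - 1) (k - 1)))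
       \<and> (\<forall>n k. 1 \<le> n \<longrightarrow> 1 \<le> k \<longrightarrow> k \<le> n \<longrightarrow>
            real k * whitney1 m r n k
            = (\<Sum>l=k..n. real (n choose (l - 1)) * (- real m) ^ (n - l) * fact (n - l)
                 * whitney1 m r (l - 1) (k - 1)))"
proof -
  have c: "real m \<noteq> 0" using assms by simp
  have ca: "real m * (- real r / real m) = - real r" using c by simp
  show ?thesis
  proof (intro conjI allI impI)
    fix n k
    show "whitney1 m r (n + 1) (k + 1) =
            (\<Sum>j\<le>n. real (n + 1) / real (k + 1) * real ((k + j) choose j)
                 * bernoulli_num j * real m ^ j * whitney1 m r n (k + j))"
      unfolding W bernoulli_num_def by (rule part1[OF c, of n "- real r / real m" k])
  next
    fix n k :: nat
    assume "1 \<le> n" "1 \<le> k" "k \<le> n"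
    then show "whitney1 m r n k + real r * (\<Sum>l=0..n-1. real ((n - 1) choose l) * fact (n - l - 1)
                 * whitney1 m r l k * (- real m) ^ (n - l - 1))
            = (\<Sum>l=k..n. real ((n - 1) choose (l - 1)) * (- real m) ^ (n - l) * fact (n - l)
                 * whitney1 m r (l - 1) (k - 1))"
      unfolding W by (rule part2[OF c ca, of n k])
  next
    fix n k :: nat
    assume "1 \<le> n" "1 \<le> k" "k \<le> n"
    then show "real k * whitney1 m r n k
            = (\<Sum>l=k..n. real (n choose (l - 1)) * (- real m) ^ (n - l) * fact (n - l)
                 * whitney1 m r (l - 1) (k - 1))"
      unfolding W by (rule part3[OF c, of n k])
  qed
qed

end
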